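(* Let $C\in\mathbb{R}^{n\times n}$ be invertible and consider the utility $U(\theta,\omega) = \theta^T C\omega + U'(\theta,\omega)$, where $U'$ is differentiable and satisfies, at every point $(\theta,\omega)$ at which it is evaluated by the dynamics below, $$\left\|\begin{bmatrix}\nabla_\theta U'(\theta,\omega)\\ \nabla_\omega U'(\theta,\omega)\end{bmatrix}\right\|_2 \le \alpha := c\, r^{1/3} m^{-1/6} H^{5/2} \log^{1/2} m,$$ for a constant $c>0$, where $m$ is the width and $H$ the depth of the neural networks parameterizing the players and $r$ bounds the distance of the weights from their initialization. Let $(\theta_t,\omega_t)_{t\ge 0}$ be a sequence satisfying the Implicit Update (IU) dynamics $$\theta_{t+1} = \theta_t - \eta\nabla_\theta U(\theta_{t+1},\omega_{t+1}),\qquad \omega_{t+1} = \omega_t + \eta\nabla_\omega U(\theta_{t+1},\omega_{t+1})$$ with step size $\eta = 1/\sqrt{\lambda_{\max}(CC^T)}$. Then the IU dynamics converges to a neighborhood of the optimum $(0,0)$ of size $$O\!\left(\frac{1}{1-1/\sqrt{2}}\, r^{1/3} m^{-1/6} H^{5/2}\log^{1/2} m\, \frac{\sqrt{\lambda_{\max}(CC^T)}}{\lambda_{\min}(CC^T)}\right),$$ i.e. $\limsup_{t\to\infty}\left\|\begin{bmatrix}\theta_t\\ \omega_t\end{bmatrix}\right\|_2$ is bounded by a quantity of this order.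
   Context: Setting: both players of a GAN-type min-max game are overparameterized neural networks; after the reduction of a game linear in both players to the form $\theta^T C\omega$ (with $C$ invertible, equilibrium at the origin), the finite-width utility is $\theta^T C\omega$ plus a perturbation $U'$ whose gradient is bounded by the neural-tangent-kernel linearization error $O(r^{1/3}m^{-1/6}H^{5/2}\log^{1/2}m)$ (which holds with probability at least $1-e^{-\Omega(\log^2 m)}$ for networks of depth $H$ and sufficiently large width $m$ whose weights stay within distance $r$ of initialization). $\theta$ is the minimizing player and $\omega$ the maximizing player. $\lambda_{\max}(\cdot),\lambda_{\min}(\cdot)$ denote largest and smallest eigenvalues. *)

theory Defs
  imports "HOL-Analysis.Analysis"
begin

text \<open>Gradient of a real-valued function on a real inner product space:
  the (unique, when f is differentiable at x) vector g with Df(x) h = g \<bullet> h.\<close>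
definition grad :: "('a::real_inner \<Rightarrow> real) \<Rightarrow> 'a \<Rightarrow> 'a" where
  "grad f x = (THE g. (f has_derivative (\<lambda>h. g \<bullet> h)) (at x))"

definition is_eigenvalue :: "real^'n^'n \<Rightarrow> real \<Rightarrow> bool" where
  "is_eigenvalue A l \<longleftrightarrow> (\<exists>v. v \<noteq> 0 \<and> A *v v = l *\<^sub>R v)"

definition lambda_max :: "real^'n^'n \<Rightarrow> real" where
  "lambda_max A = Max {l. is_eigenvalue A l}"

definition lambda_min :: "real^'n^'n \<Rightarrow> real" where
  "lambda_min A = Min {l. is_eigenvalue A l}"

end

theory Submission imports Defs begin



lemma grad_eqI:
  fixes f :: "real^'n \<Rightarrow> real"
  assumes "(f has_derivative (\<lambda>h. g \<bullet> h)) (at x)"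
  shows "grad f x = g"
proof -
  have uniq: "g' = g" if "(f has_derivative (\<lambda>h. g' \<bullet> h)) (at x)" for g'
  proof -
    have "(\<lambda>h. g' \<bullet> h) = (\<lambda>h. g \<bullet> h)" using has_derivative_unique[OF that assms] .
    hence "g' \<bullet> (g' - g) = g \<bullet> (g' - g)" by metis
    hence "(g' - g) \<bullet> (g' - g) = 0" by (simp add: inner_diff_left)
    thus ?thesis by simp
  qed
  show ?thesis unfolding grad_def
    by (rule the_equality) (rule assms, erule uniq)
qed

lemma grad_has_derivative:
  fixes f :: "real^'n \<Rightarrow> real"
  assumes "f differentiable (at x)"
  shows "(f has_derivative (\<lambda>h. grad f x \<bullet> h)) (at x)"
proof -
  obtain D where D: "(f has_derivative D) (at x)" using assms differentiable_def by blast
  hence lin: "linear D" using has_derivative_linear by blast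
  have "D = (\<lambda>h. adjoint D 1 \<bullet> h)"
    using adjoint_clauses(2)[OF lin] by (auto simp: fun_eq_iff)
  with D have "(f has_derivative (\<lambda>h. adjoint D 1 \<bullet> h)) (at x)" by simp
  with grad_eqI show ?thesis by metis
qed

lemma grad_add_lin:
  fixes f :: "real^'n \<Rightarrow> real"
  assumes "f differentiable (at x)"
  shows "grad (\<lambda>y. v \<bullet> y + f y) x = v + grad f x"
proof (rule grad_eqI)
  have "((\<lambda>y. v \<bullet> y) has_derivative (\<lambda>h. v \<bullet> h)) (at x)"
    by (rule bounded_linear_imp_has_derivative) (rule bounded_linear_inner_right)
  from has_derivative_add[OF this grad_has_derivative[OF assms]]
  show "((\<lambda>y. v \<bullet> y + f y) has_derivative (\<lambda>h. (v + grad f x) \<bullet> h)) (at x)"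
    by (simp add: inner_add_left)
qed

lemma partial_diff1:
  fixes U :: "real^'n \<Rightarrow> real^'n \<Rightarrow> real"
  assumes "\<And>p. (\<lambda>q. U (fst q) (snd q)) differentiable (at p)"
  shows "(\<lambda>x. U x w) differentiable (at x)"
proof -
  have "(\<lambda>x. (x, w)) differentiable (at x)"
    by (intro differentiable_Pair differentiable_ident differentiable_const)
  from differentiable_chain_at[OF this assms]
  show ?thesis by (simp add: o_def)
qed

lemma partial_diff2:
  fixes U :: "real^'n \<Rightarrow> real^'n \<Rightarrow> real"
  assumes "\<And>p. (\<lambda>q. U (fst q) (snd q)) differentiable (at p)"
  shows "(\<lambda>y. U x y) differentiable (at w)"
proof -
  have "(\<lambda>y. (x, y)) differentiable (at w)"
    by (intro differentiable_Pair differentiable_ident differentiable_const)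
  from differentiable_chain_at[OF this assms]
  show ?thesis by (simp add: o_def)
qed




lemma quad_zero:
  fixes d e :: real
  assumes "\<And>t. 0 \<le> 2*t*d + t^2*e"
  shows "d = 0"
proof (rule ccontr)
  assume dn: "d \<noteq> 0"
  define a where "a = \<bar>e\<bar> + 2"
  have p: "a > 0" "e \<le> a" by (auto simp: a_def)
  define t where "t = - d / a"
  have "2*t*d + t^2*e \<le> 2*t*d + t^2*a"
    using p by (intro add_left_mono mult_left_mono) auto
  also have "\<dots> = - (d^2) / a"
    using p by (simp add: t_def field_simps power2_eq_square)
  also have "\<dots> < 0"
    using dn p by simp
  finally show False using assms[of t] by simp
qed

lemma inner_BBt:
  fixes B :: "real^'n^'n"
  shows "x \<bullet> ((B ** transpose B) *v y) = (transpose B *v x) \<bullet> (transpose B *v y)"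
  by (metis dot_lmul_matrix matrix_vector_mul_assoc transpose_matrix_vector)

lemma inj_transpose:
  fixes B :: "real^'n^'n"
  assumes "invertible B" "transpose B *v x = 0"
  shows "x = 0"
proof -
  have "invertible (transpose B)" using assms transpose_invertible by blast
  then obtain B' where B': "B' ** transpose B = mat 1" unfolding invertible_def by blast
  have "x = B' *v (transpose B *v x)"
    by (metis B' matrix_vector_mul_assoc matrix_vector_mul_lid)
  thus ?thesis using assms by simp
qed

lemma eig_facts:
  fixes B :: "real^'n^'n"
  assumes inv: "invertible B"
  shows "finite {l. is_eigenvalue (B ** transpose B) l}"
    and "{l. is_eigenvalue (B ** transpose B) l} \<noteq> {}"
    and "\<And>l. is_eigenvalue (B ** transpose B) l \<Longrightarrow> l > 0"
    and "\<And>x. lambda_min (B ** transpose B) * (norm x)^2 \<le> (norm (transpose B *v x))^2"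
proof -
  define A where "A = B ** transpose B"
  define E where "E = {l. is_eigenvalue A l}"
  have sym: "x \<bullet> (A *v y) = (A *v x) \<bullet> y" for x y
    unfolding A_def by (metis inner_BBt inner_commute)
  have quad: "x \<bullet> (A *v x) = (norm (transpose B *v x))^2" for x
    unfolding A_def inner_BBt by (simp add: power2_norm_eq_inner)
  show pos: "l > 0" if "is_eigenvalue (B ** transpose B) l" for l
  proof -
    from that obtain v where v: "v \<noteq> 0" "A *v v = l *\<^sub>R v"
      unfolding is_eigenvalue_def A_def by blast
    have "transpose B *v v \<noteq> 0" using inj_transpose[OF inv] v by blast
    hence "0 < (norm (transpose B *v v))^2" by simp
    also have "\<dots> = l * (norm v)^2" using quad[of v] v by (simp add: power2_norm_eq_inner)
    finally show ?thesis using v by (simp add: zero_less_mult_iff)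
  qed
  show fin: "finite {l. is_eigenvalue (B ** transpose B) l}"
  proof -
    define ev where "ev l = (SOME v. v \<noteq> 0 \<and> A *v v = l *\<^sub>R v)" for l
    have ev: "ev l \<noteq> 0 \<and> A *v ev l = l *\<^sub>R ev l" if "l \<in> E" for l
      using that unfolding E_def is_eigenvalue_def ev_def by (metis (mono_tags, lifting) someI_ex mem_Collect_eq)
    have orth: "ev l \<bullet> ev k = 0" if "l \<in> E" "k \<in> E" "l \<noteq> k" for l k
    proof -
      have "l * (ev l \<bullet> ev k) = (A *v ev l) \<bullet> ev k" using ev[OF that(1)] by simp
      also have "\<dots> = ev l \<bullet> (A *v ev k)" using sym by simp
      also have "\<dots> = k * (ev l \<bullet> ev k)" using ev[OF that(2)] by simp
      finally show ?thesis using that(3) by simp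
    qed
    have injev: "inj_on ev E"
    proof
      fix l k assume h: "l \<in> E" "k \<in> E" "ev l = ev k"
      show "l = k"
      proof (rule ccontr)
        assume "l \<noteq> k"
        hence "ev l \<bullet> ev l = 0" using orth[OF h(1,2)] h(3) by simp
        thus False using ev[OF h(1)] by simp
      qed
    qed
    have "pairwise orthogonal (ev ` E)"
      unfolding pairwise_def orthogonal_def using orth by auto
    moreover have "0 \<notin> ev ` E" using ev by auto
    ultimately have "independent (ev ` E)" by (rule pairwise_orthogonal_independent)
    hence "finite (ev ` E)" using independent_bound by blast
    hence "finite E" using finite_imageD injev by blast
    thus ?thesis unfolding E_def A_def .
  qed
  define f where "f x = x \<bullet> (A *v x)" for x :: "real^'n"
  have cont: "continuous_on (sphere 0 1) f" unfolding f_def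
    by (intro continuous_intros linear_continuous_on bounded_linear_inner_right matrix_vector_mul_bounded_linear)
  have "sphere (0::real^'n) 1 \<noteq> {}" by simp
  then obtain v where v1: "v \<in> sphere 0 1" and vmin: "\<And>y. y \<in> sphere 0 1 \<Longrightarrow> f v \<le> f y"
    using continuous_attains_inf[OF compact_sphere _ cont] by blast
  define \<mu> where "\<mu> = f v"
  have fscale: "f (a *\<^sub>R x) = a^2 * f x" for a x
    by (simp add: f_def matrix_vector_mult_scaleR power2_eq_square)
  have ray: "\<mu> * (norm x)^2 \<le> f x" for x
  proof (cases "x = 0")
    case True thus ?thesis by (simp add: f_def)
  next
    case False
    hence "(1 / norm x) *\<^sub>R x \<in> sphere 0 1" by simp
    hence "\<mu> \<le> f ((1 / norm x) *\<^sub>R x)" using vmin \<mu>_def by blast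
    also have "\<dots> = f x / (norm x)^2" by (simp add: fscale power_divide)
    finally show ?thesis using False by (simp add: field_simps)
  qed
  have nv: "norm v = 1" using v1 by simp
  have eigv: "A *v v = \<mu> *\<^sub>R v"
  proof -
    define w where "w = A *v v - \<mu> *\<^sub>R v"
    have "\<And>t. 0 \<le> 2*t*(w \<bullet> w) + t^2*(f w - \<mu> * (norm w)^2)"
    proof -
      fix t :: real
      have "\<mu> * (norm (v + t *\<^sub>R w))^2 \<le> f (v + t *\<^sub>R w)" by (rule ray)
      moreover have "f (v + t *\<^sub>R w) = f v + 2 * t * (w \<bullet> (A *v v)) + t^2 * f w"
        unfolding f_def using sym[of w v]
        by (simp add: matrix_vector_right_distrib matrix_vector_mult_scaleR inner_add_left inner_add_right
            power2_eq_square algebra_simps inner_commute)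
      moreover have "(norm (v + t *\<^sub>R w))^2 = 1 + 2 * t * (v \<bullet> w) + t^2 * (norm w)^2"
      proof -
        have vv: "v \<bullet> v = 1" using nv by (simp add: dot_square_norm)
        have ww: "w \<bullet> w = (norm w)^2" by (simp add: dot_square_norm)
        show ?thesis
          by (simp only: power2_norm_eq_inner) (simp add: inner_add_left inner_add_right vv ww
            inner_commute[of w v] algebra_simps power2_eq_square)
      qed
      moreover have e4: "w \<bullet> (A *v v) = w \<bullet> w + \<mu> * (v \<bullet> w)"
        unfolding w_def by (simp add: inner_diff_right inner_diff_left inner_commute algebra_simps)
      ultimately show "0 \<le> 2*t*(w \<bullet> w) + t^2*(f w - \<mu> * (norm w)^2)"
        by (simp add: e4 algebra_simps \<mu>_def)
    qed
    hence "w \<bullet> w = 0" by (rule quad_zero)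
    thus ?thesis unfolding w_def by simp
  qed
  have "v \<noteq> 0" using nv by auto
  hence muE: "\<mu> \<in> E" unfolding E_def is_eigenvalue_def using eigv by blast
  thus "{l. is_eigenvalue (B ** transpose B) l} \<noteq> {}" unfolding E_def A_def by blast
  have "lambda_min A \<le> \<mu>" unfolding lambda_min_def using fin muE unfolding E_def A_def
    by simp
  moreover have "lambda_min A > 0" unfolding lambda_min_def using fin muE pos unfolding E_def A_def
    by (metis (mono_tags, lifting) Min_in empty_iff mem_Collect_eq)
  ultimately show "lambda_min (B ** transpose B) * (norm x)^2 \<le> (norm (transpose B *v x))^2" for x
    using ray[of x] quad[of x] unfolding A_def f_def
    by (smt (verit, ccfv_SIG) mult_right_mono zero_le_power2)
qed



lemma final_ineq:
  fixes \<mu> \<Lambda> \<alpha> :: real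
  assumes mu: "0 < \<mu>" "\<mu> \<le> \<Lambda>" and al: "0 \<le> \<alpha>"
  shows "(1 / sqrt \<Lambda>) * \<alpha> / (sqrt (1 + (1 / sqrt \<Lambda>)^2 * \<mu>) - 1)
         \<le> 1 / (1 - 1 / sqrt 2) * \<alpha> * sqrt \<Lambda> / \<mu>"
proof -
  define s where "s = sqrt \<Lambda>"
  have Lp: "\<Lambda> > 0" using mu by simp
  have s: "s > 0" "s^2 = \<Lambda>" using Lp by (auto simp: s_def)
  define k where "k = sqrt (1 + \<mu> / \<Lambda>)"
  have k2: "k^2 = 1 + \<mu> / \<Lambda>" using mu Lp by (simp add: k_def)
  have k1: "k > 1" using mu Lp by (simp add: k_def)
  have "\<mu> / \<Lambda> \<le> 1" using mu Lp by simp
  hence "k \<le> sqrt 2" unfolding k_def by simp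
  have r2: "sqrt 2 + 1 \<le> 1 / (1 - 1 / sqrt 2)"
  proof -
    have q: "sqrt 2 * sqrt 2 = 2" by simp
    have p: "1 - 1 / sqrt 2 > 0" by (simp add: field_simps)
    have "(sqrt 2 + 1) * (1 - 1 / sqrt 2) = sqrt 2 - 1 / sqrt 2"
      by (simp add: field_simps q)
    also have "\<dots> = sqrt 2 / 2" by (simp add: field_simps q)
    also have "\<dots> \<le> 1" using sqrt2_less_2 by simp
    finally show ?thesis using p by (simp add: field_simps)
  qed
  have eq: "(1 / sqrt \<Lambda>) * \<alpha> / (sqrt (1 + (1 / sqrt \<Lambda>)^2 * \<mu>) - 1) = \<alpha> * (k + 1) * s / \<mu>"
  proof -
    have "(1 / sqrt \<Lambda>)^2 * \<mu> = \<mu> / \<Lambda>" using Lp by (simp add: power_divide)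
    hence "sqrt (1 + (1 / sqrt \<Lambda>)^2 * \<mu>) = k" by (simp add: k_def)
    have kk: "(k - 1) * (k + 1) = \<mu> / \<Lambda>" using k2 by (simp add: algebra_simps power2_eq_square)
    from kk have m: "\<mu> = (k - 1) * (k + 1) * s * s" using s Lp by (simp add: field_simps power2_eq_square)
    have "\<alpha> * (k + 1) * s / \<mu> = \<alpha> * (k + 1) * s / ((k - 1) * (k + 1) * s * s)"
      by (subst m) (rule refl)
    also have "\<dots> = \<alpha> / ((k - 1) * s)"
    proof -
      have ne: "(k - 1) * (k + 1) * s * s \<noteq> 0" "(k - 1) * s \<noteq> 0" using k1 s by auto
      show ?thesis by (subst frac_eq_eq[OF ne]) (simp add: algebra_simps)
    qed
    finally show ?thesis using \<open>sqrt (1 + (1 / sqrt \<Lambda>)^2 * \<mu>) = k\<close> s_def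
      by (simp add: field_simps)
  qed
  have "\<alpha> * (k + 1) * s / \<mu> \<le> \<alpha> * (1 / (1 - 1 / sqrt 2)) * s / \<mu>"
    using \<open>k \<le> sqrt 2\<close> r2 al s mu
    by (intro divide_right_mono mult_right_mono mult_left_mono) auto
  thus ?thesis using eq by (simp add: s_def mult_ac)
qed


lemma eig_swap:
  fixes B :: "real^'n^'n"
  assumes inv: "invertible B" and e: "is_eigenvalue (B ** transpose B) l"
  shows "is_eigenvalue (transpose B ** B) l"
proof -
  from e obtain v where v: "v \<noteq> 0" "(B ** transpose B) *v v = l *\<^sub>R v"
    unfolding is_eigenvalue_def by blast
  define w where "w = transpose B *v v"
  have "w \<noteq> 0" using inj_transpose[OF inv] v unfolding w_def by blast
  moreover have "(transpose B ** B) *v w = l *\<^sub>R w"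
  proof -
    have "(transpose B ** B) *v w = transpose B *v ((B ** transpose B) *v v)"
      unfolding w_def by (simp only: matrix_vector_mul_assoc matrix_mul_assoc)
    also have "\<dots> = l *\<^sub>R w" using v(2) by (simp add: w_def matrix_vector_mult_scaleR)
    finally show ?thesis .
  qed
  ultimately show ?thesis unfolding is_eigenvalue_def by blast
qed

theorem theorem1:
  fixes C :: "real^'n^'n"
    and U' :: "real^'n \<Rightarrow> real^'n \<Rightarrow> real"
    and \<theta> \<omega> :: "nat \<Rightarrow> real^'n"
    and c r :: real and m H :: nat
  assumes invC: "invertible C"
    and cpos: "c > 0" and rpos: "r > 0" and m2: "m \<ge> 2" and H1: "H \<ge> 1"
    and diff: "\<And>p. (\<lambda>q. U' (fst q) (snd q)) differentiable (at p)"
    and bound: "\<And>t. norm (grad (\<lambda>x. U' x (\<omega> (Suc t))) (\<theta> (Suc t)),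
                            grad (\<lambda>y. U' (\<theta> (Suc t)) y) (\<omega> (Suc t)))
                 \<le> c * r powr (1/3) * real m powr (-1/6) * real H powr (5/2) * sqrt (ln (real m))"
    and IU: "\<And>t. \<theta> (Suc t) = \<theta> t - (1 / sqrt (lambda_max (C ** transpose C))) *\<^sub>R
                     grad (\<lambda>x. x \<bullet> (C *v \<omega> (Suc t)) + U' x (\<omega> (Suc t))) (\<theta> (Suc t))
             \<and> \<omega> (Suc t) = \<omega> t + (1 / sqrt (lambda_max (C ** transpose C))) *\<^sub>R
                     grad (\<lambda>y. \<theta> (Suc t) \<bullet> (C *v y) + U' (\<theta> (Suc t)) y) (\<omega> (Suc t))"
  shows "limsup (\<lambda>t. ereal (norm (\<theta> t, \<omega> t)))
           \<le> ereal (1 / (1 - 1 / sqrt 2)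
                    * (c * r powr (1/3) * real m powr (-1/6) * real H powr (5/2) * sqrt (ln (real m)))
                    * sqrt (lambda_max (C ** transpose C)) / lambda_min (C ** transpose C))"
proof -
  define \<alpha> where "\<alpha> = c * r powr (1/3) * real m powr (-1/6) * real H powr (5/2) * sqrt (ln (real m))"
  define \<Lambda> where "\<Lambda> = lambda_max (C ** transpose C)"
  define \<mu> where "\<mu> = lambda_min (C ** transpose C)"
  define E where "E = {l. is_eigenvalue (C ** transpose C) l}"
  define \<eta> where "\<eta> = 1 / sqrt \<Lambda>"
  have Efin: "finite E" and Ene: "E \<noteq> {}" and Epos: "\<And>l. l \<in> E \<Longrightarrow> l > 0"
    using eig_facts[OF invC] unfolding E_def by auto
  have mupos: "\<mu> > 0" unfolding \<mu>_def lambda_min_def E_def[symmetric]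
    using Efin Ene Epos Min_in by blast
  have muL: "\<mu> \<le> \<Lambda>" unfolding \<mu>_def lambda_min_def \<Lambda>_def lambda_max_def E_def[symmetric]
    using Efin Ene by (meson Max_ge Min_le Min_in order_trans)
  have Lpos: "\<Lambda> > 0" using mupos muL by simp
  have inv2: "invertible (transpose C)" using invC transpose_invertible by blast
  have Eeq: "{l. is_eigenvalue (transpose C ** transpose (transpose C)) l} = E"
    unfolding E_def using eig_swap[OF invC] eig_swap[OF inv2] by (auto simp: transpose_transpose)
  have lowT: "\<mu> * (norm x)^2 \<le> (norm (transpose C *v x))^2" for x
    using eig_facts(4)[OF invC] unfolding \<mu>_def by blast
  have lowC: "\<mu> * (norm x)^2 \<le> (norm (C *v x))^2" for x
    using eig_facts(4)[OF inv2, of x] Eeq unfolding \<mu>_def lambda_min_def E_def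
    by (simp add: transpose_transpose)
  define N where "N t = norm (\<theta> t, \<omega> t)" for t
  define k where "k = sqrt (1 + \<eta>^2 * \<mu>)"
  have k1: "k > 1" unfolding k_def \<eta>_def using mupos Lpos by simp
  have step: "k * N (Suc t) \<le> N t + \<eta> * \<alpha>" for t
  proof -
    let ?th = "\<theta> (Suc t)" and ?om = "\<omega> (Suc t)"
    define a where "a = grad (\<lambda>x. U' x ?om) ?th"
    define b where "b = grad (\<lambda>y. U' ?th y) ?om"
    have ab: "norm (a, b) \<le> \<alpha>" using bound[of t] unfolding a_def b_def \<alpha>_def .
    have g1: "grad (\<lambda>x. x \<bullet> (C *v ?om) + U' x ?om) ?th = C *v ?om + a"
    proof -
      have "(\<lambda>x. x \<bullet> (C *v ?om) + U' x ?om) = (\<lambda>x. (C *v ?om) \<bullet> x + U' x ?om)"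
        by (simp add: inner_commute)
      thus ?thesis using grad_add_lin[OF partial_diff1[OF diff]] unfolding a_def by simp
    qed
    have g2: "grad (\<lambda>y. ?th \<bullet> (C *v y) + U' ?th y) ?om = transpose C *v ?th + b"
    proof -
      have "(\<lambda>y. ?th \<bullet> (C *v y) + U' ?th y) = (\<lambda>y. (transpose C *v ?th) \<bullet> y + U' ?th y)"
        by (simp add: dot_lmul_matrix)
      thus ?thesis using grad_add_lin[OF partial_diff2[OF diff]] unfolding b_def by simp
    qed
    have IU1: "?th = \<theta> t - \<eta> *\<^sub>R (C *v ?om + a)"
      using conjunct1[OF IU[of t]] unfolding g1 \<eta>_def \<Lambda>_def .
    have IU2: "?om = \<omega> t + \<eta> *\<^sub>R (transpose C *v ?th + b)"
      using conjunct2[OF IU[of t]] unfolding g2 \<eta>_def \<Lambda>_def .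
    have e1: "?th + \<eta> *\<^sub>R (C *v ?om) = \<theta> t - \<eta> *\<^sub>R a"
      by (subst IU1) (simp add: algebra_simps scaleR_add_right)
    have e2: "?om - \<eta> *\<^sub>R (transpose C *v ?th) = \<omega> t + \<eta> *\<^sub>R b"
      by (subst (1) IU2) (simp add: algebra_simps scaleR_add_right)
    define P where "P = ?th + \<eta> *\<^sub>R (C *v ?om)"
    define Q where "Q = ?om - \<eta> *\<^sub>R (transpose C *v ?th)"
    have cross: "?th \<bullet> (C *v ?om) = (transpose C *v ?th) \<bullet> ?om"
      by (simp add: dot_lmul_matrix)
    have PQ: "(norm P)^2 + (norm Q)^2 = (norm ?th)^2 + (norm ?om)^2
        + \<eta>^2 * ((norm (C *v ?om))^2 + (norm (transpose C *v ?th))^2)"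
      unfolding P_def Q_def power2_norm_eq_inner
      using cross
      by (simp add: inner_add_left inner_add_right inner_diff_left inner_diff_right
          inner_commute power2_eq_square algebra_simps)
    have "(k * N (Suc t))^2 = (1 + \<eta>^2 * \<mu>) * ((norm ?th)^2 + (norm ?om)^2)"
      unfolding N_def k_def using mupos by (simp add: power_mult_distrib norm_Pair)
    also have "\<dots> \<le> (norm P)^2 + (norm Q)^2"
    proof -
      have "\<eta>^2 * (\<mu> * (norm ?om)^2 + \<mu> * (norm ?th)^2)
          \<le> \<eta>^2 * ((norm (C *v ?om))^2 + (norm (transpose C *v ?th))^2)"
        using lowT[of ?th] lowC[of ?om] by (intro mult_left_mono add_mono) auto
      thus ?thesis unfolding PQ by (simp add: algebra_simps)
    qed
    also have "\<dots> = (norm (P, Q))^2" by (simp add: norm_Pair)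
    finally have "k * N (Suc t) \<le> norm (P, Q)"
      by (rule power2_le_imp_le) simp_all
    also have "(P, Q) = (\<theta> t, \<omega> t) + \<eta> *\<^sub>R (- a, b)"
      using e1 e2 unfolding P_def Q_def by simp
    also have "norm \<dots> \<le> N t + \<eta> * \<alpha>"
    proof -
      have "norm ((\<theta> t, \<omega> t) + \<eta> *\<^sub>R (- a, b)) \<le> N t + norm (\<eta> *\<^sub>R (- a, b))"
        unfolding N_def by (rule norm_triangle_ineq)
      moreover have "norm (\<eta> *\<^sub>R (- a, b)) = \<eta> * norm (a, b)"
        using Lpos by (simp only: norm_scaleR) (simp add: \<eta>_def norm_Pair)
      moreover have "\<eta> * norm (a, b) \<le> \<eta> * \<alpha>"
        using ab Lpos by (intro mult_left_mono) (auto simp: \<eta>_def)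
      ultimately show ?thesis by linarith
    qed
    finally show ?thesis .
  qed
  define q where "q = 1 / k"
  define L where "L = \<eta> * \<alpha> / (k - 1)"
  have q01: "0 < q" "q < 1" using k1 by (auto simp: q_def)
  have Lfix: "q * (L + \<eta> * \<alpha>) = L"
    using k1 by (simp add: q_def L_def field_simps)
  have rec: "N (Suc t) - L \<le> q * (N t - L)" for t
  proof -
    have "N (Suc t) \<le> q * (N t + \<eta> * \<alpha>)"
      using step[of t] k1 by (simp add: q_def field_simps)
    thus ?thesis using Lfix by (simp add: algebra_simps)
  qed
  define K where "K = \<bar>N 0 - L\<bar>"
  have bnd: "N t \<le> L + q^t * K" for t
  proof (induction t)
    case 0 show ?case by (simp add: K_def)
  next
    case (Suc t)
    have "N (Suc t) - L \<le> q * (N t - L)" by (rule rec)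
    also have "\<dots> \<le> q * (q^t * K)" using Suc q01 by (intro mult_left_mono) auto
    finally show ?case by simp
  qed
  have lim: "(\<lambda>t. ereal (L + q^t * K)) \<longlonglongrightarrow> ereal L"
  proof -
    have "(\<lambda>t. q^t) \<longlonglongrightarrow> 0" by (rule LIMSEQ_power_zero) (use q01 in simp)
    hence "(\<lambda>t. q^t * K) \<longlonglongrightarrow> 0 * K" by (rule tendsto_mult[OF _ tendsto_const])
    hence "(\<lambda>t. L + q^t * K) \<longlonglongrightarrow> L + 0 * K" by (rule tendsto_add[OF tendsto_const])
    thus ?thesis by simp
  qed
  have "limsup (\<lambda>t. ereal (norm (\<theta> t, \<omega> t))) \<le> limsup (\<lambda>t. ereal (L + q^t * K))"
    using bnd unfolding N_def by (intro Limsup_mono) auto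
  also have "\<dots> = ereal L" using lim by (intro lim_imp_Limsup) auto
  also have "\<dots> \<le> ereal (1 / (1 - 1 / sqrt 2) * \<alpha> * sqrt \<Lambda> / \<mu>)"
  proof -
    have al: "0 \<le> \<alpha>" using bound[of 0] unfolding \<alpha>_def by (meson norm_ge_zero order_trans)
    show ?thesis using final_ineq[OF mupos muL al] unfolding L_def \<eta>_def k_def by simp
  qed
  finally show ?thesis unfolding \<alpha>_def \<Lambda>_def \<mu>_def .
qed

end
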